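(* Let $d$ be odd and $n\ge d+1$. Then: (i) if $n=d+1$, $C^d_n=A_n$; (ii) if $n=d+2$, $C^d_n=A_n\cap(S_{\frac{n-1}{2}}\times S_{\frac{n+1}{2}})$, where $S_{\frac{n-1}{2}}$ permutes the even indices and $S_{\frac{n+1}{2}}$ permutes the odd indices in $\{1,\dots,n\}$; (iii) if $n\ge d+3$ and $\frac{d+1}{2}$ is even, $C^d_n\cong\mathbb Z/2$; (iv) if $n\ge d+3$ and $\frac{d+1}{2}$ is odd, $C^d_n$ is trivial.
   Context: For $n\ge d+1$, let $C^d_n\subseteq S_n$ be the subgroup of permutations $\sigma$ with the following property: for all $x_1,\dots,x_n\in\mathbb R^d$ such that the $(d+1)\times n$ matrix with columns $\binom{1}{x_1},\dots,\binom{1}{x_n}$ has all maximal minors positive, the matrix with columns $\binom{1}{x_{\sigma(1)}},\dots,\binom{1}{x_{\sigma(n)}}$ also has all maximal minors positive. Equivalently, $C^d_n$ is the stabiliser, under column permutation, of the set of such positive matrices. $A_n$ is the alternating group. *)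

theory Defs
  imports "Jordan_Normal_Form.Determinant" "HOL-Algebra.Sym_Groups" "HOL-Algebra.Elementary_Groups"
begin

text \<open>A configuration of n points in R^d is a function x, where x i k is the k-th
 coordinate (k < d) of the i-th point (1 <= i <= n).  The associated (d+1) x n matrix
 has column i equal to (1, x i 0, ..., x i (d-1)).\<close>

definition lifted_entry :: "(nat \<Rightarrow> nat \<Rightarrow> real) \<Rightarrow> nat \<Rightarrow> nat \<Rightarrow> real" where
  "lifted_entry x i r = (if r = 0 then 1 else x i (r - 1))"

definition max_minor :: "nat \<Rightarrow> (nat \<Rightarrow> nat \<Rightarrow> real) \<Rightarrow> (nat \<Rightarrow> nat) \<Rightarrow> real" where
  "max_minor d x c = det (mat (d+1) (d+1) (\<lambda>(r, k). lifted_entry x (c k) r))"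

definition all_minors_pos :: "nat \<Rightarrow> nat \<Rightarrow> (nat \<Rightarrow> nat \<Rightarrow> real) \<Rightarrow> bool" where
  "all_minors_pos d n x \<longleftrightarrow>
     (\<forall>c. strict_mono_on {..<d+1} c \<and> (\<forall>k<d+1. c k \<in> {1..n}) \<longrightarrow> max_minor d x c > 0)"

definition C_group :: "nat \<Rightarrow> nat \<Rightarrow> (nat \<Rightarrow> nat) set" where
  "C_group d n = {\<sigma>. \<sigma> permutes {1..n} \<and>
      (\<forall>x. all_minors_pos d n x \<longrightarrow> all_minors_pos d n (\<lambda>j. x (\<sigma> j)))}"

end

theory Submission
  imports Defs
begin


lemma vdm_step_prod:
  fixes t :: "nat \<Rightarrow> real"
  shows "(\<Prod>b<Suc m. \<Prod>a<b. (t b - t a)) =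
     (\<Prod>k<m. (t (Suc k) - t 0)) * (\<Prod>b<m. \<Prod>a<b. (t (Suc b) - t (Suc a)))"
proof -
  have "(\<Prod>b<Suc m. \<Prod>a<b. (t b - t a)) = (\<Prod>b<m. \<Prod>a<Suc b. (t (Suc b) - t a))"
    by (simp only: prod.lessThan_Suc_shift) (simp del: prod.lessThan_Suc)
  also have "\<dots> = (\<Prod>b<m. (t (Suc b) - t 0) * (\<Prod>a<b. (t (Suc b) - t (Suc a))))"
    by (simp only: prod.lessThan_Suc_shift)
  finally show ?thesis by (simp add: prod.distrib)
qed

lemma vandermonde:
  fixes t :: "nat \<Rightarrow> real"
  shows "det (mat m m (\<lambda>(r,k). t k ^ r)) = (\<Prod>b<m. \<Prod>a<b. (t b - t a))"
proof (induction m arbitrary: t)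
  case 0
  then show ?case by (simp add: det_def)
next
  case (Suc m)
  define A where "A = mat (Suc m) (Suc m) (\<lambda>(r,k). t k ^ r)"
  define L where "L = mat (Suc m) (Suc m) (\<lambda>(i,j). (if i = j then 1 else 0) + (if Suc j = i then - t 0 else 0))"
  define B where "B = mat m m (\<lambda>(r,k). t (Suc k) ^ r * (t (Suc k) - t 0))"
  define V where "V = mat m m (\<lambda>(r,k). t (Suc k) ^ r)"
  define D where "D = mat m m (\<lambda>(i,j). if i = j then t (Suc j) - t 0 else 0)"
  have A: "A \<in> carrier_mat (Suc m) (Suc m)" and L: "L \<in> carrier_mat (Suc m) (Suc m)"
    and Vc: "V \<in> carrier_mat m m" and Dc: "D \<in> carrier_mat m m" 
    unfolding A_def L_def V_def D_def by auto
  have detL: "det L = 1"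
    by (subst det_lower_triangular[OF _ L]) (auto simp: L_def prod_list_diag_prod)
  have detD: "det D = (\<Prod>k<m. (t (Suc k) - t 0))"
    by (subst det_lower_triangular[OF _ Dc]) (auto simp: D_def prod_list_diag_prod atLeast0LessThan)
  have BVD: "B = V * D"
  proof (rule eq_matI)
    fix i j assume ij: "i < dim_row (V * D)" "j < dim_col (V * D)"
    have "(V * D) $$ (i, j) = (\<Sum>l<m. V $$ (i,l) * D $$ (l,j))"
      using ij Vc Dc by (simp add: scalar_prod_def atLeast0LessThan)
    also have "\<dots> = (\<Sum>l<m. if l = j then t (Suc j) ^ i * (t (Suc j) - t 0) else 0)"
      by (rule sum.cong) (use ij Vc Dc in \<open>auto simp: V_def D_def\<close>)
    also have "\<dots> = t (Suc j) ^ i * (t (Suc j) - t 0)" using ij Dc by simp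
    finally show "B $$ (i, j) = (V * D) $$ (i, j)" using ij Vc Dc by (simp add: B_def)
  qed (auto simp: B_def V_def D_def)
  have detB: "det B = (\<Prod>k<m. (t (Suc k) - t 0)) * det V"
    using BVD det_mult[OF Vc Dc] detD by simp
  have LA: "L * A = four_block_mat (mat 1 1 (\<lambda>_. 1)) (mat 1 m (\<lambda>_. 1)) (0\<^sub>m m 1) B"
  proof (rule eq_matI)
    fix i j assume ij: "i < dim_row (four_block_mat (mat 1 1 (\<lambda>_. 1)) (mat 1 m (\<lambda>_. 1)) (0\<^sub>m m 1) B)"
       "j < dim_col (four_block_mat (mat 1 1 (\<lambda>_. 1)) (mat 1 m (\<lambda>_. 1)) (0\<^sub>m m 1) B)"
    then have i: "i < Suc m" and j: "j < Suc m" by (auto simp: B_def)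
    have "(L * A) $$ (i, j) = (\<Sum>l<Suc m. L $$ (i,l) * A $$ (l,j))"
      using i j L A by (simp add: scalar_prod_def atLeast0LessThan)
    also have "\<dots> = (\<Sum>l<Suc m. (if l = i then t j ^ l else 0) + (if Suc l = i then - t 0 * t j ^ l else 0))"
      by (rule sum.cong) (use i j in \<open>auto simp: L_def A_def algebra_simps\<close>)
    also have "\<dots> = t j ^ i + (if i = 0 then 0 else - t 0 * t j ^ (i - 1))"
      using i by (cases i) (auto simp: sum.distrib)
    finally have eq: "(L * A) $$ (i, j) = t j ^ i + (if i = 0 then 0 else - t 0 * t j ^ (i - 1))" .
    show "(L * A) $$ (i, j) = four_block_mat (mat 1 1 (\<lambda>_. 1)) (mat 1 m (\<lambda>_. 1)) (0\<^sub>m m 1) B $$ (i, j)"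
      unfolding eq using i j
      by (cases i; cases j) (auto simp: four_block_mat_def B_def algebra_simps)
  qed (auto simp: L_def A_def B_def four_block_mat_def)
  have "det (L * A) = det B"
    unfolding LA
    by (subst det_four_block_mat_lower_left_zero_col) (auto simp: B_def det_def)
  hence "det A = det B" using det_mult[OF L A] detL by simp
  also have "\<dots> = (\<Prod>k<m. (t (Suc k) - t 0)) * (\<Prod>b<m. \<Prod>a<b. (t (Suc b) - t (Suc a)))"
    unfolding detB V_def using Suc.IH[of "\<lambda>k. t (Suc k)"] by simp
  finally show ?case unfolding A_def vdm_step_prod .
qed

lemma det_permute_cols:
  fixes f :: "nat \<Rightarrow> nat \<Rightarrow> real"
  assumes p: "p permutes {..<m}"
  shows "det (mat m m (\<lambda>(r,k). f r (p k))) = of_int (sign p) * det (mat m m (\<lambda>(r,k). f r k))"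
proof -
  let ?A = "mat m m (\<lambda>(r,k). f r k)"
  have A: "transpose_mat ?A \<in> carrier_mat m m" by simp
  have p': "p permutes {0..<m}" using p by (simp add: atLeast0LessThan)
  have pl: "\<And>j. j < m \<Longrightarrow> p j < m" using permutes_in_image[OF p] by auto
  have "mat m m (\<lambda>(r,k). f r (p k)) = transpose_mat (mat m m (\<lambda>(i,j). transpose_mat ?A $$ (p i, j)))"
    using pl by (intro eq_matI) auto
  hence "det (mat m m (\<lambda>(r,k). f r (p k))) = det (mat m m (\<lambda>(i,j). transpose_mat ?A $$ (p i, j)))"
    by (simp add: det_transpose[of _ m])
  also have "\<dots> = of_int (sign p) * det (transpose_mat ?A)"
    by (rule det_permute_rows[OF A p'])
  finally show ?thesis by (simp add: det_transpose[of _ m])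
qed

definition mom :: "nat \<Rightarrow> nat \<Rightarrow> real" where
  "mom i k = real i ^ (k+1)"

lemma max_minor_mom:
  "max_minor d mom c = (\<Prod>b<d+1. \<Prod>a<b. (real (c b) - real (c a)))"
proof -
  have "mat (d+1) (d+1) (\<lambda>(r, k). lifted_entry mom (c k) r) = mat (d+1) (d+1) (\<lambda>(r, k). real (c k) ^ r)"
    by (rule eq_matI) (auto simp: lifted_entry_def mom_def)
  then show ?thesis unfolding max_minor_def using vandermonde[where t="\<lambda>k. real (c k)" and m="d+1"] by simp
qed

lemma max_minor_perm:
  assumes "p permutes {..<d+1}"
  shows "max_minor d x (c \<circ> p) = of_int (sign p) * max_minor d x c"
  unfolding max_minor_def
  using det_permute_cols[OF assms, of "\<lambda>r k. lifted_entry x (c k) r"] by simp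

lemma max_minor_cong:
  assumes "\<And>k. k < d+1 \<Longrightarrow> c k = c' k"
  shows "max_minor d x c = max_minor d x c'"
proof -
  have "mat (d+1) (d+1) (\<lambda>(r, k). lifted_entry x (c k) r) = mat (d+1) (d+1) (\<lambda>(r, k). lifted_entry x (c' k) r)"
    by (rule eq_matI) (auto simp: assms)
  then show ?thesis unfolding max_minor_def by simp
qed

lemma max_minor_comp:
  "max_minor d (\<lambda>j. x (\<sigma> j)) c = max_minor d x (\<sigma> \<circ> c)"
  unfolding max_minor_def lifted_entry_def comp_def by simp

lemma prod_pos_iff:
  fixes f :: "'a \<Rightarrow> real"
  assumes "finite A" "\<And>x. x \<in> A \<Longrightarrow> f x \<noteq> 0"
  shows "prod f A > 0 \<longleftrightarrow> even (card {x\<in>A. f x < 0})"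
  using assms
proof (induction A rule: finite_induct)
  case empty
  then show ?case by simp
next
  case (insert a A)
  have fa: "f a \<noteq> 0" using insert by auto
  have IH: "prod f A > 0 \<longleftrightarrow> even (card {x\<in>A. f x < 0})" using insert by auto
  have nz: "prod f A \<noteq> 0" using insert by auto
  show ?case
  proof (cases "f a < 0")
    case True
    have "{x\<in>insert a A. f x < 0} = insert a {x\<in>A. f x < 0}" using True by auto
    moreover have "card (insert a {x\<in>A. f x < 0}) = Suc (card {x\<in>A. f x < 0})"
      using insert by simp
    moreover have "prod f (insert a A) > 0 \<longleftrightarrow> prod f A < 0"
      using True insert nz by (simp add: zero_less_mult_iff)
    ultimately show ?thesis using IH nz by auto
  next
    case False
    hence "f a > 0" using fa by simp
    have "{x\<in>insert a A. f x < 0} = {x\<in>A. f x < 0}" using False by auto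
    moreover have "prod f (insert a A) > 0 \<longleftrightarrow> prod f A > 0"
      using \<open>f a > 0\<close> insert by (simp add: zero_less_mult_iff)
    ultimately show ?thesis using IH by auto
  qed
qed

definition inv_set :: "(nat \<Rightarrow> nat) \<Rightarrow> nat set \<Rightarrow> (nat \<times> nat) set" where
  "inv_set \<sigma> S = {(i,j). i \<in> S \<and> j \<in> S \<and> i < j \<and> \<sigma> j < \<sigma> i}"

definition ninv :: "(nat \<Rightarrow> nat) \<Rightarrow> nat set \<Rightarrow> nat" where
  "ninv \<sigma> S = card (inv_set \<sigma> S)"

lemma mom_prod_pos_iff:
  fixes c \<sigma> :: "nat \<Rightarrow> nat" and m :: nat
  assumes c: "strict_mono_on {..<m} c" and s: "inj_on \<sigma> (c ` {..<m})"
  shows "(\<Prod>b<m. \<Prod>a<b. (real (\<sigma> (c b)) - real (\<sigma> (c a)))) > 0 \<longleftrightarrow> even (ninv \<sigma> (c ` {..<m}))"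
proof -
  let ?P = "SIGMA b:{..<m}. {..<b}"
  let ?f = "\<lambda>(b,a). real (\<sigma> (c b)) - real (\<sigma> (c a))"
  have cinj: "inj_on c {..<m}" by (rule strict_mono_on_imp_inj_on[OF c(1)])
  have eq: "(\<Prod>b<m. \<Prod>a<b. (real (\<sigma> (c b)) - real (\<sigma> (c a)))) = prod ?f ?P"
    by (subst prod.Sigma) auto
  have fin: "finite ?P" by auto
  have nz: "?f p \<noteq> 0" if "p \<in> ?P" for p
  proof -
    obtain b a where p: "p = (b,a)" "a < b" "b < m" using \<open>p \<in> ?P\<close> by auto
    have "c a < c b" using c p by (intro strict_mono_onD[OF c]) auto
    moreover have "c a \<in> c ` {..<m}" "c b \<in> c ` {..<m}" using p by auto
    ultimately have "\<sigma> (c a) \<noteq> \<sigma> (c b)" using inj_onD[OF s] by force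
    thus ?thesis using p by simp
  qed
  have bij: "bij_betw (\<lambda>(b,a). (c a, c b)) {p\<in>?P. ?f p < 0} (inv_set \<sigma> (c ` {..<m}))"
  proof (rule bij_betwI')
    fix p q assume pq: "p \<in> {p\<in>?P. ?f p < 0}" "q \<in> {p\<in>?P. ?f p < 0}"
    obtain b a b' a' where pq': "p = (b,a)" "q = (b',a')" by fastforce
    have "a < m" "b < m" "a' < m" "b' < m" using pq pq' by auto
    then have "(c a = c a') = (a = a')" "(c b = c b') = (b = b')"
      using inj_onD[OF cinj] by blast+
    then show "((\<lambda>(b,a). (c a, c b)) p = (\<lambda>(b,a). (c a, c b)) q) = (p = q)"
      using pq' by auto
  next
    fix p assume "p \<in> {p\<in>?P. ?f p < 0}"
    then obtain b a where p: "p = (b,a)" "a < b" "b < m" "\<sigma> (c b) < \<sigma> (c a)" by auto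
    have "c a < c b" using p by (intro strict_mono_onD[OF c]) auto
    then show "(\<lambda>(b,a). (c a, c b)) p \<in> inv_set \<sigma> (c ` {..<m})"
      using p by (auto simp: inv_set_def)
  next
    fix q assume "q \<in> inv_set \<sigma> (c ` {..<m})"
    then obtain a b where q: "q = (c a, c b)" "a < m" "b < m" "c a < c b" "\<sigma> (c b) < \<sigma> (c a)"
      by (auto simp: inv_set_def)
    have "a < b"
    proof (rule ccontr)
      assume "\<not> a < b"
      hence "b \<le> a" by simp
      hence "c b \<le> c a" using strict_mono_onD[OF c, of b a] q by (cases "b = a") auto
      thus False using q by simp
    qed
    then show "\<exists>p\<in>{p\<in>?P. ?f p < 0}. q = (\<lambda>(b,a). (c a, c b)) p"
      using q by (intro bexI[of _ "(b,a)"]) auto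
  qed
  have "card {p\<in>?P. ?f p < 0} = ninv \<sigma> (c ` {..<m})"
    unfolding ninv_def using bij_betw_same_card[OF bij] .
  then show ?thesis unfolding eq using prod_pos_iff[OF fin nz] by simp
qed

lemma enum_exists:
  fixes S :: "nat set"
  assumes "finite S" "card S = m"
  shows "\<exists>c. strict_mono_on {..<m} c \<and> c ` {..<m} = S"
proof -
  let ?xs = "sorted_list_of_set S"
  have len: "length ?xs = m" using assms by simp
  have "strict_mono_on {..<m} (\<lambda>k. ?xs ! k)"
    unfolding strict_mono_on_def using len
    by (auto intro: sorted_wrt_nth_less strict_sorted_list_of_set)
  moreover have "(\<lambda>k. ?xs ! k) ` {..<m} = S"
    using len assms by (metis image_set lessThan_atLeast0 map_nth set_sorted_list_of_set set_upt)
  ultimately show ?thesis by blast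
qed

lemma sort_decomp:
  fixes g :: "nat \<Rightarrow> nat" and m :: nat
  assumes g: "inj_on g {..<m}"
  shows "\<exists>c p. strict_mono_on {..<m} c \<and> p permutes {..<m} \<and> (\<forall>k<m. g k = c (p k)) \<and> c ` {..<m} = g ` {..<m}"
proof -
  have "card (g ` {..<m}) = m" using card_image[OF g] by simp
  then obtain c where c: "strict_mono_on {..<m} c" "c ` {..<m} = g ` {..<m}"
    using enum_exists[of "g ` {..<m}" m] by auto
  have cinj: "inj_on c {..<m}" by (rule strict_mono_on_imp_inj_on[OF c(1)])
  have cb: "bij_betw c {..<m} (g ` {..<m})" using cinj c(2) by (simp add: bij_betw_def)
  define p where "p k = (if k < m then the_inv_into {..<m} c (g k) else k)" for k
  have gb: "bij_betw g {..<m} (g ` {..<m})" using g by (simp add: bij_betw_def)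
  have "bij_betw (the_inv_into {..<m} c \<circ> g) {..<m} {..<m}"
    by (rule bij_betw_trans[OF gb bij_betw_the_inv_into[OF cb]])
  hence "bij_betw p {..<m} {..<m}"
    by (rule bij_betw_cong[THEN iffD1, rotated]) (auto simp: p_def)
  hence pp: "p permutes {..<m}" by (rule bij_imp_permutes) (auto simp: p_def)
  have "g k = c (p k)" if "k < m" for k
  proof -
    have "g k \<in> c ` {..<m}" using that c(2) by auto
    then show ?thesis using that by (simp add: p_def f_the_inv_into_f[OF cinj])
  qed
  then have "\<forall>k<m. g k = c (p k)" by blast
  then show ?thesis using c pp by (intro exI[of _ c] exI[of _ p]) simp
qed


definition Eset :: "nat \<Rightarrow> nat \<Rightarrow> (nat \<Rightarrow> nat) set" where
  "Eset d n = {\<sigma>. \<sigma> permutes {1..n} \<and> (\<forall>S. S \<subseteq> {1..n} \<and> card S = d+1 \<longrightarrow> even (ninv \<sigma> S))}"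

lemma mom_minor_pos:
  assumes c: "strict_mono_on {..<d+1} c"
  shows "max_minor d mom c > 0"
proof -
  have "(\<Prod>b<d+1. \<Prod>a<b. (real (c b) - real (c a))) > 0"
  proof (intro prod_pos ballI)
    fix b a assume "b \<in> {..<d+1}" "a \<in> {..<b}"
    then have "c a < c b" by (intro strict_mono_onD[OF c]) auto
    then show "real (c b) - real (c a) > 0" by simp
  qed
  then show ?thesis by (simp add: max_minor_mom)
qed

lemma mom_pos: "all_minors_pos d n mom"
  unfolding all_minors_pos_def using mom_minor_pos by blast

lemma C_eq: "C_group d n = Eset d n"
proof
  show "C_group d n \<subseteq> Eset d n"
  proof
    fix \<sigma> assume "\<sigma> \<in> C_group d n"
    then have sp: "\<sigma> permutes {1..n}" and pres: "all_minors_pos d n (\<lambda>j. mom (\<sigma> j))"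
      using mom_pos unfolding C_group_def by auto
    have "even (ninv \<sigma> S)" if S: "S \<subseteq> {1..n}" "card S = d+1" for S
    proof -
      have "finite S" using S(1) finite_subset by blast
      then obtain c where c: "strict_mono_on {..<d+1} c" "c ` {..<d+1} = S"
        using enum_exists[of S "d+1"] S(2) by auto
      have "\<forall>k<d+1. c k \<in> {1..n}" using c(2) S(1) by auto
      then have "max_minor d (\<lambda>j. mom (\<sigma> j)) c > 0" using pres c(1) unfolding all_minors_pos_def by blast
      then have "max_minor d mom (\<sigma> \<circ> c) > 0" by (simp add: max_minor_comp)
      then have "(\<Prod>b<d+1. \<Prod>a<b. (real (\<sigma> (c b)) - real (\<sigma> (c a)))) > 0"
        by (simp add: max_minor_mom)
      moreover have "inj_on \<sigma> (c ` {..<d+1})"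
        using permutes_inj[OF sp] by (metis inj_on_subset subset_UNIV)
      ultimately show ?thesis using mom_prod_pos_iff[OF c(1)] c(2) by simp
    qed
    then show "\<sigma> \<in> Eset d n" using sp unfolding Eset_def by blast
  qed
next
  show "Eset d n \<subseteq> C_group d n"
  proof
    fix \<sigma> assume "\<sigma> \<in> Eset d n"
    then have sp: "\<sigma> permutes {1..n}" and E: "\<And>S. S \<subseteq> {1..n} \<Longrightarrow> card S = d+1 \<Longrightarrow> even (ninv \<sigma> S)"
      unfolding Eset_def by auto
    have "all_minors_pos d n (\<lambda>j. x (\<sigma> j))" if x: "all_minors_pos d n x" for x
      unfolding all_minors_pos_def
    proof (intro allI impI)
      fix c assume cv: "strict_mono_on {..<d+1} c \<and> (\<forall>k<d+1. c k \<in> {1..n})"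
      have sinj: "inj \<sigma>" using permutes_inj[OF sp] .
      have cinj: "inj_on c {..<d+1}" using cv strict_mono_on_imp_inj_on by auto
      have ginj: "inj_on (\<sigma> \<circ> c) {..<d+1}"
        using cinj sinj by (simp add: comp_inj_on inj_on_subset)
      obtain c' p where cp: "strict_mono_on {..<d+1} c'" "p permutes {..<d+1}"
        "\<forall>k<d+1. (\<sigma> \<circ> c) k = c' (p k)" "c' ` {..<d+1} = (\<sigma> \<circ> c) ` {..<d+1}"
        using sort_decomp[OF ginj] by blast
      have "(\<sigma> \<circ> c) ` {..<d+1} \<subseteq> {1..n}"
        using cv permutes_in_image[OF sp] by auto
      then have "c' ` {..<d+1} \<subseteq> {1..n}" using cp(4) by simp
      then have c'v: "\<forall>k<d+1. c' k \<in> {1..n}" by blast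
      have eq1: "max_minor d x (\<sigma> \<circ> c) = of_int (sign p) * max_minor d x c'"
        using max_minor_cong[of d "\<sigma> \<circ> c" "c' \<circ> p" x] cp(3) max_minor_perm[OF cp(2), of x c']
        by simp
      have eq2: "max_minor d mom (\<sigma> \<circ> c) = of_int (sign p) * max_minor d mom c'"
        using max_minor_cong[of d "\<sigma> \<circ> c" "c' \<circ> p" mom] cp(3) max_minor_perm[OF cp(2), of mom c']
        by simp
      have S1: "c ` {..<d+1} \<subseteq> {1..n}" using cv by auto
      have S2: "card (c ` {..<d+1}) = d+1" using card_image[OF cinj] by simp
      have "(\<Prod>b<d+1. \<Prod>a<b. (real (\<sigma> (c b)) - real (\<sigma> (c a)))) > 0"
        using mom_prod_pos_iff[of "d+1" c \<sigma>] cv E[OF S1 S2] inj_on_subset[OF sinj] by auto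
      then have "max_minor d mom (\<sigma> \<circ> c) > 0" by (simp add: max_minor_mom)
      moreover have "max_minor d mom c' > 0" using mom_minor_pos[OF cp(1)] .
      ultimately have "of_int (sign p) > (0::real)" using eq2 by (simp add: zero_less_mult_iff)
      then have "sign p = 1" by (simp add: sign_def split: if_splits)
      moreover have "max_minor d x c' > 0" using x cp(1) c'v unfolding all_minors_pos_def by blast
      ultimately show "max_minor d (\<lambda>j. x (\<sigma> j)) c > 0"
        using eq1 by (simp add: max_minor_comp)
    qed
    then show "\<sigma> \<in> C_group d n" using sp unfolding C_group_def by blast
  qed
qed



lemma evenperm_ninv:
  assumes sp: "\<sigma> permutes {1..n}" and n: "n \<ge> 1"
  shows "evenperm \<sigma> \<longleftrightarrow> even (ninv \<sigma> {1..n})"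
proof -
  define s where "s k = (if k < n then Suc k else if k = n then 0 else k)" for k
  define s' where "s' k = (if k = 0 then n else if k \<le> n then k - 1 else k)" for k
  have ss': "s' (s k) = k" for k by (auto simp: s_def s'_def)
  have s's: "s (s' k) = k" for k by (auto simp: s_def s'_def)
  have sperm: "s permutes {0..n}"
    by (rule bij_imp_permutes) (auto simp: s_def intro!: bij_betwI[where g=s'] simp: s'_def)
  have s'perm: "s' permutes {0..n}"
    by (rule bij_imp_permutes) (auto simp: s'_def intro!: bij_betwI[where g=s] simp: s_def)
  have ps: "permutation s" "permutation s'" "permutation \<sigma>"
    using permutes_imp_permutation[OF _ sperm] permutes_imp_permutation[OF _ s'perm]
      permutes_imp_permutation[OF _ sp] by auto
  define p where "p = s' \<circ> \<sigma> \<circ> s"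
  have sig: "\<sigma> k = k" if "k \<notin> {1..n}" for k using sp that by (simp add: permutes_not_in)
  have sigin: "\<sigma> k \<in> {1..n}" if "k \<in> {1..n}" for k using permutes_in_image[OF sp] that by blast
  have pfix: "p k = k" if "k \<ge> n" for k
  proof (cases "k = n")
    case True
    then show ?thesis using sig[of 0] by (simp add: p_def s_def s'_def)
  next
    case False
    then show ?thesis using that sig[of k] by (simp add: p_def s_def s'_def)
  qed
  have pval: "p k = \<sigma> (Suc k) - 1" if "k < n" for k
  proof -
    have "\<sigma> (Suc k) \<in> {1..n}" using sigin that by simp
    then show ?thesis using that by (simp add: p_def s_def s'_def)
  qed
  have "bij (s' \<circ> \<sigma> \<circ> s)"
    using permutes_bij[OF sperm] permutes_bij[OF s'perm] permutes_bij[OF sp]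
    by (simp add: bij_comp)
  then have pperm: "p permutes {..<n}"
    unfolding permutes_def p_def[symmetric] using pfix
    by (metis bij_iff lessThan_iff not_less)
  have signp: "sign p = sign \<sigma>"
  proof -
    have "sign p = sign s' * sign \<sigma> * sign s"
      unfolding p_def using ps by (simp add: sign_compose permutation_compose)
    moreover have "sign s' * sign s = 1"
      using sign_compose[OF ps(2) ps(1)] ss' by (simp add: comp_def id_def[symmetric])
    ultimately show ?thesis by (metis mult.commute mult.left_commute mult_1_right)
  qed
  define d where "d = n - 1"
  have dn: "d + 1 = n" using n by (simp add: d_def)
  have eqc: "max_minor d mom (\<sigma> \<circ> Suc) = max_minor d mom (Suc \<circ> p)"
  proof (rule max_minor_cong)
    fix k assume k: "k < d + 1"
    then have "\<sigma> (Suc k) \<in> {1..n}" using sigin dn by simp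
    then show "(\<sigma> \<circ> Suc) k = (Suc \<circ> p) k" using pval[of k] k dn by simp
  qed
  have "max_minor d mom (Suc \<circ> p) = of_int (sign p) * max_minor d mom Suc"
    using max_minor_perm[of p d mom Suc] pperm dn by simp
  moreover have "max_minor d mom Suc > 0"
    by (rule mom_minor_pos, rule strict_mono_onI) simp
  ultimately have "evenperm \<sigma> \<longleftrightarrow> max_minor d mom (\<sigma> \<circ> Suc) > 0"
    using eqc signp by (auto simp: sign_def zero_less_mult_iff)
  also have "\<dots> \<longleftrightarrow> (\<Prod>b<n. \<Prod>a<b. (real (\<sigma> (Suc b)) - real (\<sigma> (Suc a)))) > 0"
    by (simp only: max_minor_mom dn o_apply)
  also have "\<dots> \<longleftrightarrow> even (ninv \<sigma> (Suc ` {..<n}))"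
    by (rule mom_prod_pos_iff, rule strict_mono_onI, simp, rule inj_on_subset[OF permutes_inj[OF sp] subset_UNIV])
  also have "Suc ` {..<n} = {1..n}"
  proof
    show "{1..n} \<subseteq> Suc ` {..<n}"
    proof
      fix x assume "x \<in> {1..n}"
      then have "x = Suc (x - 1)" "x - 1 < n" by auto
      then show "x \<in> Suc ` {..<n}" by blast
    qed
  qed auto
  finally show ?thesis .
qed


definition ip :: "(nat \<Rightarrow> nat) \<Rightarrow> nat \<Rightarrow> nat \<Rightarrow> bool" where
  "ip \<sigma> i s \<longleftrightarrow> (i < s \<and> \<sigma> s < \<sigma> i) \<or> (s < i \<and> \<sigma> i < \<sigma> s)"

lemma ip_sym: "ip \<sigma> i s = ip \<sigma> s i"
  unfolding ip_def by auto

lemma finite_inv_set: "finite S \<Longrightarrow> finite (inv_set \<sigma> S)"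
  by (rule finite_subset[of _ "S \<times> S"]) (auto simp: inv_set_def)

lemma ninv_insert:
  assumes S: "finite S" and i: "i \<notin> S"
  shows "ninv \<sigma> (insert i S) = ninv \<sigma> S + card {s\<in>S. ip \<sigma> i s}"
proof -
  define B1 where "B1 = {s\<in>S. i < s \<and> \<sigma> s < \<sigma> i}"
  define B2 where "B2 = {s\<in>S. s < i \<and> \<sigma> i < \<sigma> s}"
  have "inv_set \<sigma> (insert i S) = inv_set \<sigma> S \<union> ((\<lambda>s. (i,s)) ` B1 \<union> (\<lambda>s. (s,i)) ` B2)"
    by (auto simp: inv_set_def B1_def B2_def)
  moreover have "inv_set \<sigma> S \<inter> ((\<lambda>s. (i,s)) ` B1 \<union> (\<lambda>s. (s,i)) ` B2) = {}"
    using i by (auto simp: inv_set_def B1_def B2_def)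
  moreover have "(\<lambda>s. (i,s)) ` B1 \<inter> (\<lambda>s. (s,i)) ` B2 = {}"
    by (auto simp: B1_def B2_def)
  moreover have "B1 \<inter> B2 = {}" by (auto simp: B1_def B2_def)
  moreover have "{s\<in>S. ip \<sigma> i s} = B1 \<union> B2" by (auto simp: B1_def B2_def ip_def)
  moreover have "finite B1" "finite B2" using S by (auto simp: B1_def B2_def)
  moreover have "card ((\<lambda>s. (i,s)) ` B1) = card B1" by (rule card_image) (auto simp: inj_on_def)
  moreover have "card ((\<lambda>s. (s,i)) ` B2) = card B2" by (rule card_image) (auto simp: inj_on_def)
  ultimately show ?thesis unfolding ninv_def
    using finite_inv_set[OF S, of \<sigma>]
    by (simp add: card_Un_disjoint)
qed

lemma card_two_preds:
  assumes "finite S"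
  shows "card {s\<in>S. P s} + card {s\<in>S. Q s} = 2 * card {s\<in>S. P s \<and> Q s} + card {s\<in>S. P s \<noteq> Q s}"
  using assms
proof (induction S rule: finite_induct)
  case empty
  then show ?case by simp
next
  case (insert x F)
  have e: "\<And>R. {s\<in>insert x F. R s} = (if R x then insert x {s\<in>F. R s} else {s\<in>F. R s})" by auto
  have c: "\<And>R. card (insert x {s\<in>F. R s}) = Suc (card {s\<in>F. R s})" using insert by simp
  show ?case using insert.IH by (simp only: e) (auto simp: c)
qed

lemma parity_X:
  fixes R X :: "nat set"
  assumes R: "finite R" and XR: "X \<subseteq> R" and d: "odd d" and cR: "card R \<ge> d + 1"
    and ev: "\<And>S. S \<subseteq> R \<Longrightarrow> card S = d \<Longrightarrow> even (card (X \<inter> S))"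
  shows "X = {}"
proof (rule ccontr)
  assume "X \<noteq> {}"
  then obtain s where s: "s \<in> X" by blast
  show False
  proof (cases "R \<subseteq> X")
    case True
    obtain S where S: "S \<subseteq> R" "card S = d" using obtain_subset_with_card_n[of d R] cR by auto
    then have "X \<inter> S = S" using True by auto
    then show False using ev[OF S] S d by simp
  next
    case False
    then obtain t where t: "t \<in> R" "t \<notin> X" by blast
    have st: "s \<noteq> t" using s t by auto
    have "{s,t} \<subseteq> R" using s t XR by auto
    then have "card (R - {s,t}) = card R - card {s,t}" using R by (simp add: card_Diff_subset finite_subset)
    then have "card (R - {s,t}) = card R - 2" using st by simp
    then have "card (R - {s,t}) \<ge> d - 1" using cR by simp
    then obtain S0 where S0: "S0 \<subseteq> R - {s,t}" "card S0 = d - 1"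
      using obtain_subset_with_card_n[of "d-1" "R - {s,t}"] by auto
    have fS0: "finite S0" using S0(1) R finite_subset by blast
    have d1: "Suc (d - 1) = d" using d by (cases d) auto
    have ns: "s \<notin> S0" and nt: "t \<notin> S0" using S0(1) by auto
    have A: "insert s S0 \<subseteq> R" "card (insert s S0) = d"
      using S0 s XR fS0 d1 ns by auto
    have B: "insert t S0 \<subseteq> R" "card (insert t S0) = d"
      using S0 t fS0 d1 nt by auto
    have "X \<inter> insert s S0 = insert s (X \<inter> S0)" using s by auto
    moreover have "X \<inter> insert t S0 = X \<inter> S0" using t by auto
    moreover have "s \<notin> X \<inter> S0" using S0 by auto
    moreover have "finite (X \<inter> S0)" using fS0 by simp
    ultimately show False using ev[OF A] ev[OF B] by simp
  qed
qed

lemma incr_perm_id: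
  fixes \<sigma> :: "nat \<Rightarrow> nat"
  assumes sp: "\<sigma> permutes {1..n}"
    and mono: "\<And>i j. i \<in> {1..n} \<Longrightarrow> j \<in> {1..n} \<Longrightarrow> i < j \<Longrightarrow> \<sigma> i < \<sigma> j"
  shows "\<sigma> = id"
proof
  fix k
  show "\<sigma> k = id k"
  proof (cases "k \<in> {1..n}")
    case False
    then show ?thesis using sp by (simp add: permutes_not_in)
  next
    case True
    have inj: "inj_on \<sigma> A" for A using permutes_inj[OF sp] by (metis inj_on_subset subset_UNIV)
    have img: "\<sigma> x \<in> {1..n}" if "x \<in> {1..n}" for x using permutes_in_image[OF sp] that by blast
    have "\<sigma> ` {1..k} \<subseteq> {1..\<sigma> k}"
    proof
      fix y assume "y \<in> \<sigma> ` {1..k}"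
      then obtain x where x: "x \<in> {1..k}" "y = \<sigma> x" by blast
      then have "x \<in> {1..n}" using True by simp
      then have "\<sigma> x \<le> \<sigma> k" "\<sigma> x \<ge> 1" using mono[of x k] x True img[of x] by (cases "x = k"; auto)+
      then show "y \<in> {1..\<sigma> k}" using x by auto
    qed
    then have "card {1..k} \<le> card {1..\<sigma> k}" by (intro card_inj_on_le[OF inj]) auto
    then have le1: "k \<le> \<sigma> k" by simp
    have "\<sigma> ` {k..n} \<subseteq> {\<sigma> k..n}"
    proof
      fix y assume "y \<in> \<sigma> ` {k..n}"
      then obtain x where x: "x \<in> {k..n}" "y = \<sigma> x" by blast
      then have "x \<in> {1..n}" using True by auto
      then have "\<sigma> k \<le> \<sigma> x" "\<sigma> x \<le> n" using mono[of k x] x True img[of x] by (cases "x = k"; auto)+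
      then show "y \<in> {\<sigma> k..n}" using x by auto
    qed
    then have "card {k..n} \<le> card {\<sigma> k..n}" by (intro card_inj_on_le[OF inj]) auto
    then have "\<sigma> k \<le> k" using True img[OF True] by auto
    then show ?thesis using le1 by simp
  qed
qed


definition revp :: "nat \<Rightarrow> nat \<Rightarrow> nat" where
  "revp n i = (if i \<in> {1..n} then Suc n - i else i)"

lemma revp_revp: "revp n (revp n i) = i"
  by (auto simp: revp_def)

lemma revp_permutes: "revp n permutes {1..n}"
  by (rule bij_imp_permutes, rule bij_betwI[where g="revp n"]) (auto simp: revp_def)

lemma revp_ne_id: "n \<ge> 2 \<Longrightarrow> revp n \<noteq> id"
proof
  assume "n \<ge> 2" "revp n = id"
  then have "revp n 1 = 1" by simp
  then show False using \<open>n \<ge> 2\<close> by (simp add: revp_def)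
qed

lemma ninv_id: "ninv id S = 0"
proof -
  have "inv_set id S = {}" by (auto simp: inv_set_def)
  then show ?thesis by (simp add: ninv_def)
qed

lemma ninv_revp:
  assumes "S \<subseteq> {1..n}"
  shows "2 * ninv (revp n) S = card S * (card S - 1)"
proof -
  have "finite S" using assms finite_subset by blast
  then show ?thesis using assms
  proof (induction S rule: finite_induct)
    case empty
    then show ?case by (simp add: ninv_def inv_set_def)
  next
    case (insert x F)
    have "{s\<in>F. ip (revp n) x s} = F"
    proof -
      have "ip (revp n) x s" if "s \<in> F" for s
      proof -
        have "s \<in> {1..n}" "x \<in> {1..n}" "s \<noteq> x" using insert that by auto
        then show ?thesis by (auto simp: ip_def revp_def)
      qed
      then show ?thesis by auto
    qed
    then have "ninv (revp n) (insert x F) = ninv (revp n) F + card F"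
      using ninv_insert[OF insert(1,2)] by simp
    then show ?case using insert by (cases "card F") auto
  qed
qed

lemma parity_half:
  assumes "odd (d::nat)"
  shows "even ((d + 1) * (d + 1 - 1) div 2) \<longleftrightarrow> even ((d + 1) div 2)"
proof -
  obtain q where q: "d + 1 = 2 * q" using assms by (metis evenE odd_add odd_one)
  then have "(d + 1) * (d + 1 - 1) div 2 = q * d" by simp
  moreover have "(d + 1) div 2 = q" using q by simp
  ultimately show ?thesis using assms by simp
qed

lemma big_case:
  assumes d: "odd d" and n: "n \<ge> d + 3" and E: "\<sigma> \<in> Eset d n"
  shows "\<sigma> = id \<or> \<sigma> = revp n"
proof -
  have sp: "\<sigma> permutes {1..n}" and Ev: "\<And>S. S \<subseteq> {1..n} \<Longrightarrow> card S = d+1 \<Longrightarrow> even (ninv \<sigma> S)"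
    using E unfolding Eset_def by auto
  have key: "ip \<sigma> i s = ip \<sigma> j s"
    if ij: "i \<in> {1..n}" "j \<in> {1..n}" "s \<in> {1..n}" "i \<noteq> j" "s \<noteq> i" "s \<noteq> j" for i j s
  proof -
    define R where "R = {1..n} - {i,j}"
    define X where "X = {s\<in>R. ip \<sigma> i s \<noteq> ip \<sigma> j s}"
    have fR: "finite R" by (simp add: R_def)
    have "card R = n - 2" using ij by (simp add: R_def card_Diff_subset)
    then have cR: "card R \<ge> d + 1" using n by simp
    have "even (card (X \<inter> S))" if S: "S \<subseteq> R" "card S = d" for S
    proof -
      have fS: "finite S" using S fR finite_subset by blast
      have iS: "i \<notin> S" and jS: "j \<notin> S" using S by (auto simp: R_def)
      have "insert i S \<subseteq> {1..n}" "card (insert i S) = d+1" using S ij iS fS by (auto simp: R_def)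
      then have e1: "even (ninv \<sigma> S + card {s\<in>S. ip \<sigma> i s})" using Ev ninv_insert[OF fS iS] by metis
      have "insert j S \<subseteq> {1..n}" "card (insert j S) = d+1" using S ij jS fS by (auto simp: R_def)
      then have e2: "even (ninv \<sigma> S + card {s\<in>S. ip \<sigma> j s})" using Ev ninv_insert[OF fS jS] by metis
      have "even (card {s\<in>S. ip \<sigma> i s} + card {s\<in>S. ip \<sigma> j s})" using e1 e2 by presburger
      then have "even (2 * card {s\<in>S. ip \<sigma> i s \<and> ip \<sigma> j s} + card {s\<in>S. ip \<sigma> i s \<noteq> ip \<sigma> j s})"
        using card_two_preds[OF fS, of "ip \<sigma> i" "ip \<sigma> j"] by simp
      then have "even (card {s\<in>S. ip \<sigma> i s \<noteq> ip \<sigma> j s})" by simp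
      moreover have "X \<inter> S = {s\<in>S. ip \<sigma> i s \<noteq> ip \<sigma> j s}" using S by (auto simp: X_def)
      ultimately show ?thesis by simp
    qed
    moreover have "X \<subseteq> R" by (auto simp: X_def)
    ultimately have "X = {}" using parity_X[OF fR _ d cR, of X] by blast
    moreover have "s \<in> R" using ij by (auto simp: R_def)
    ultimately show ?thesis by (auto simp: X_def)
  qed
  have n12: "1 \<in> {1..n}" "2 \<in> {1..n}" using n by auto
  have H: "ip \<sigma> i s = ip \<sigma> 1 2" if "s \<in> {1..n}" "s \<noteq> 1" "i \<in> {1..n}" "i \<noteq> s" for i s
  proof -
    have a: "ip \<sigma> i s = ip \<sigma> 1 s"
      using key[of i 1 s] that n12 by (cases "i = 1") auto
    have b: "ip \<sigma> s 1 = ip \<sigma> 2 1"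
      using key[of s 2 1] that n12 by (cases "s = 2") auto
    show ?thesis using a b ip_sym by metis
  qed
  have const: "ip \<sigma> i s = ip \<sigma> 1 2" if "s \<in> {1..n}" "i \<in> {1..n}" "i \<noteq> s" for i s
  proof (cases "s = 1")
    case False
    then show ?thesis using H that by blast
  next
    case True
    then show ?thesis using H[of i 1] that ip_sym by (metis atLeastAtMost_iff le_numeral_extra(4))
  qed
  have img: "\<sigma> x \<in> {1..n}" if "x \<in> {1..n}" for x using permutes_in_image[OF sp] that by blast
  have neq: "\<sigma> i \<noteq> \<sigma> j" if "i \<noteq> j" for i j using permutes_inj[OF sp] that by (meson injD)
  show ?thesis
  proof (cases "ip \<sigma> 1 2")
    case False
    have "\<sigma> i < \<sigma> j" if "i \<in> {1..n}" "j \<in> {1..n}" "i < j" for i j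
    proof -
      have "\<not> ip \<sigma> i j" using const[of j i] that False by auto
      then show ?thesis using that neq[of i j] by (auto simp: ip_def)
    qed
    then have "\<sigma> = id" using incr_perm_id[OF sp] by blast
    then show ?thesis by simp
  next
    case True
    have dec: "\<sigma> j < \<sigma> i" if "i \<in> {1..n}" "j \<in> {1..n}" "i < j" for i j
    proof -
      have "ip \<sigma> i j" using const[of j i] that True by auto
      then show ?thesis using that by (auto simp: ip_def)
    qed
    have rp: "revp n \<circ> \<sigma> permutes {1..n}" by (rule permutes_compose[OF sp revp_permutes])
    have "(revp n \<circ> \<sigma>) i < (revp n \<circ> \<sigma>) j" if "i \<in> {1..n}" "j \<in> {1..n}" "i < j" for i j
      using dec[OF that] img[OF that(1)] img[OF that(2)] by (auto simp: revp_def)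
    then have "revp n \<circ> \<sigma> = id" using incr_perm_id[OF rp] by blast
    then have "\<sigma> = revp n"
      by (metis comp_apply id_apply revp_revp ext)
    then show ?thesis by simp
  qed
qed

lemma id_Eset: "id \<in> Eset d n"
  by (simp add: Eset_def ninv_id permutes_id)

lemma revp_Eset:
  assumes "n \<ge> d + 1" "odd d"
  shows "revp n \<in> Eset d n \<longleftrightarrow> even ((d + 1) div 2)"
proof -
  have "revp n \<in> Eset d n \<longleftrightarrow> (\<forall>S. S \<subseteq> {1..n} \<and> card S = d+1 \<longrightarrow> even (ninv (revp n) S))"
    using revp_permutes[of n] by (simp add: Eset_def)
  also have "\<dots> \<longleftrightarrow> even ((d + 1) * (d + 1 - 1) div 2)"
  proof
    assume A: "\<forall>S. S \<subseteq> {1..n} \<and> card S = d+1 \<longrightarrow> even (ninv (revp n) S)"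
    obtain S where S: "S \<subseteq> {1..n}" "card S = d+1"
      using obtain_subset_with_card_n[of "d+1" "{1..n}"] assms by auto
    have "ninv (revp n) S = (d + 1) * (d + 1 - 1) div 2" using ninv_revp[OF S(1)] S(2) by simp
    then show "even ((d + 1) * (d + 1 - 1) div 2)" using A S by metis
  next
    assume B: "even ((d + 1) * (d + 1 - 1) div 2)"
    show "\<forall>S. S \<subseteq> {1..n} \<and> card S = d+1 \<longrightarrow> even (ninv (revp n) S)"
    proof (intro allI impI)
      fix S assume S: "S \<subseteq> {1..n} \<and> card S = d+1"
      have "ninv (revp n) S = (d + 1) * (d + 1 - 1) div 2" using ninv_revp[of S n] S by simp
      then show "even (ninv (revp n) S)" using B by simp
    qed
  qed
  also have "\<dots> \<longleftrightarrow> even ((d + 1) div 2)" by (rule parity_half[OF assms(2)])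
  finally show ?thesis .
qed


lemma D_count:
  fixes \<sigma> :: "nat \<Rightarrow> nat"
  assumes sp: "\<sigma> permutes {1..n}" and j: "j \<in> {1..n}"
  shows "card {s\<in>{1..n}-{j}. ip \<sigma> j s} + 2 * card {s\<in>{1..n}. s < j \<and> \<sigma> s < \<sigma> j} + 2 = j + \<sigma> j"
proof -
  define A where "A = {s\<in>{1..n}. s < j \<and> \<sigma> s < \<sigma> j}"
  define B where "B = {s\<in>{1..n}. s < j \<and> \<sigma> j < \<sigma> s}"
  define C where "C = {s\<in>{1..n}. j < s \<and> \<sigma> s < \<sigma> j}"
  have img: "\<sigma> x \<in> {1..n}" if "x \<in> {1..n}" for x using permutes_in_image[OF sp] that by blast
  have inj: "inj_on \<sigma> X" for X using permutes_inj[OF sp] by (metis inj_on_subset subset_UNIV)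
  have neq: "\<sigma> s \<noteq> \<sigma> j" if "s \<noteq> j" for s using permutes_inj[OF sp] that by (meson injD)
  have fin: "finite A" "finite B" "finite C" by (auto simp: A_def B_def C_def)
  have "{s\<in>{1..n}-{j}. ip \<sigma> j s} = B \<union> C" by (auto simp: B_def C_def ip_def)
  moreover have "B \<inter> C = {}" by (auto simp: B_def C_def)
  ultimately have c1: "card {s\<in>{1..n}-{j}. ip \<sigma> j s} = card B + card C"
    using fin by (simp add: card_Un_disjoint)
  have "A \<union> B = {1..<j}"
  proof
    show "{1..<j} \<subseteq> A \<union> B"
    proof
      fix s assume "s \<in> {1..<j}"
      then have "s \<in> {1..n}" "s < j" "\<sigma> s \<noteq> \<sigma> j" using j neq[of s] by auto
      then show "s \<in> A \<union> B" by (auto simp: A_def B_def)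
    qed
  qed (use j in \<open>auto simp: A_def B_def\<close>)
  moreover have "A \<inter> B = {}" by (auto simp: A_def B_def)
  ultimately have c2: "card A + card B = j - 1" using fin by (metis card_Un_disjoint card_atLeastLessThan)
  have "A \<union> C = {s\<in>{1..n}. \<sigma> s < \<sigma> j}"
  proof
    show "{s\<in>{1..n}. \<sigma> s < \<sigma> j} \<subseteq> A \<union> C"
    proof
      fix s assume s: "s \<in> {s\<in>{1..n}. \<sigma> s < \<sigma> j}"
      then have "s \<noteq> j" by auto
      then show "s \<in> A \<union> C" using s by (auto simp: A_def C_def)
    qed
  qed (auto simp: A_def C_def)
  moreover have "A \<inter> C = {}" by (auto simp: A_def C_def)
  moreover have "bij_betw \<sigma> {s\<in>{1..n}. \<sigma> s < \<sigma> j} {1..<\<sigma> j}"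
  proof (rule bij_betw_imageI[OF inj])
    show "\<sigma> ` {s\<in>{1..n}. \<sigma> s < \<sigma> j} = {1..<\<sigma> j}"
    proof
      show "{1..<\<sigma> j} \<subseteq> \<sigma> ` {s\<in>{1..n}. \<sigma> s < \<sigma> j}"
      proof
        fix y assume y: "y \<in> {1..<\<sigma> j}"
        then have "y \<in> {1..n}" using img[OF j] by auto
        then have "y \<in> \<sigma> ` {1..n}" using permutes_image[OF sp] by simp
        then obtain s where "s \<in> {1..n}" "y = \<sigma> s" by blast
        then show "y \<in> \<sigma> ` {s\<in>{1..n}. \<sigma> s < \<sigma> j}" using y by auto
      qed
    qed (use img in auto)
  qed
  ultimately have c3: "card A + card C = \<sigma> j - 1"
    using fin by (metis bij_betw_same_card card_Un_disjoint card_atLeastLessThan)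
  have "j \<ge> 1" "\<sigma> j \<ge> 1" using j img[OF j] by auto
  then show ?thesis using c1 c2 c3 unfolding A_def[symmetric] by linarith
qed

lemma subset_card_minus1:
  assumes "S \<subseteq> {1..n}" "card S + 1 = n"
  shows "\<exists>j\<in>{1..n}. S = {1..n} - {j}"
proof -
  have "card S \<noteq> card {1..n}" using assms by simp
  then have "S \<noteq> {1..n}" by metis
  then obtain j where j: "j \<in> {1..n}" "j \<notin> S" using assms(1) by blast
  have "S \<subseteq> {1..n} - {j}" using assms(1) j by auto
  moreover have "card ({1..n} - {j}) = card S" using j assms by simp
  ultimately have "S = {1..n} - {j}" by (intro card_subset_eq) auto
  then show ?thesis using j by blast
qed

lemma ninv_split:
  assumes "j \<in> {1..n}"
  shows "ninv \<sigma> {1..n} = ninv \<sigma> ({1..n} - {j}) + card {s\<in>{1..n}-{j}. ip \<sigma> j s}"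
proof -
  have "insert j ({1..n} - {j}) = {1..n}" using assms by auto
  then show ?thesis using ninv_insert[of "{1..n} - {j}" j \<sigma>] by simp
qed

lemma arith1:
  fixes a b c F j t :: nat
  shows "even a \<Longrightarrow> F = a + b \<Longrightarrow> b + 2 * c + 2 = j + t \<Longrightarrow> even (F + j + t)"
  by presburger

lemma arith2:
  fixes a b c F j t :: nat
  shows "even F \<Longrightarrow> F = a + b \<Longrightarrow> b + 2 * c + 2 = j + t \<Longrightarrow> (even t \<longleftrightarrow> even j) \<Longrightarrow> even a"
  by presburger

lemma arith3:
  fixes F j t :: nat
  shows "even (F + j + t) \<Longrightarrow> even F \<Longrightarrow> (even t \<longleftrightarrow> even j)"
  by presburger

lemma mid_case:
  assumes d: "odd d" and n: "n = d + 2"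
  shows "\<sigma> \<in> Eset d n \<longleftrightarrow> \<sigma> permutes {1..n} \<and> evenperm \<sigma> \<and> (\<forall>i\<in>{1..n}. even (\<sigma> i) \<longleftrightarrow> even i)"
proof
  assume E: "\<sigma> \<in> Eset d n"
  have sp: "\<sigma> permutes {1..n}" and Ev: "\<And>S. S \<subseteq> {1..n} \<Longrightarrow> card S = d+1 \<Longrightarrow> even (ninv \<sigma> S)"
    using E unfolding Eset_def by auto
  have img: "\<sigma> x \<in> {1..n}" if "x \<in> {1..n}" for x using permutes_in_image[OF sp] that by blast
  have par: "even (ninv \<sigma> {1..n} + j + \<sigma> j)" if j: "j \<in> {1..n}" for j
  proof -
    have "even (ninv \<sigma> ({1..n} - {j}))" using Ev[of "{1..n} - {j}"] j n by simp
    then show ?thesis using arith1[OF _ ninv_split[OF j, of \<sigma>] D_count[OF sp j]] by blast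
  qed
  have F: "even (ninv \<sigma> {1..n})"
  proof (rule ccontr)
    assume odd: "odd (ninv \<sigma> {1..n})"
    define Od where "Od = {j\<in>{1..n}. odd j}"
    define V where "V = {j\<in>{1..n}. even j}"
    have "\<sigma> ` Od \<subseteq> V"
    proof
      fix y assume "y \<in> \<sigma> ` Od"
      then obtain j where j: "j \<in> Od" "y = \<sigma> j" by blast
      then have "j \<in> {1..n}" by (simp add: Od_def)
      then show "y \<in> V" using par[of j] odd j img by (auto simp: Od_def V_def)
    qed
    then have c1: "card Od \<le> card V"
      using permutes_inj[OF sp] by (intro card_inj_on_le[of \<sigma>]) (auto simp: V_def intro: inj_on_subset)
    have "(\<lambda>k. k - 1) ` V \<subseteq> Od - {n}" using n d by (auto simp: V_def Od_def)
    moreover have "inj_on (\<lambda>k. k - 1) V" by (auto simp: V_def inj_on_def)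
    ultimately have "card V \<le> card (Od - {n})" by (intro card_inj_on_le) (auto simp: Od_def)
    moreover have "n \<in> Od" using n d by (simp add: Od_def)
    moreover have "finite Od" by (simp add: Od_def)
    ultimately have "card V < card Od"
      by (metis card_Diff1_less le_less_trans)
    then show False using c1 by simp
  qed
  have "evenperm \<sigma>" using F evenperm_ninv[OF sp] n by simp
  moreover have "even (\<sigma> i) \<longleftrightarrow> even i" if "i \<in> {1..n}" for i using arith3[OF par[OF that] F] .
  ultimately show "\<sigma> permutes {1..n} \<and> evenperm \<sigma> \<and> (\<forall>i\<in>{1..n}. even (\<sigma> i) \<longleftrightarrow> even i)"
    using sp by blast
next
  assume A: "\<sigma> permutes {1..n} \<and> evenperm \<sigma> \<and> (\<forall>i\<in>{1..n}. even (\<sigma> i) \<longleftrightarrow> even i)"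
  then have sp: "\<sigma> permutes {1..n}" by blast
  have F: "even (ninv \<sigma> {1..n})" using A evenperm_ninv[OF sp] n by simp
  have "even (ninv \<sigma> S)" if S: "S \<subseteq> {1..n}" "card S = d+1" for S
  proof -
    obtain j where j: "j \<in> {1..n}" "S = {1..n} - {j}" using subset_card_minus1[OF S(1)] S(2) n by auto
    have "even (\<sigma> j) \<longleftrightarrow> even j" using A j by blast
    then show ?thesis using arith2[OF F ninv_split[OF j(1), of \<sigma>] D_count[OF sp j(1)]] j(2) by simp
  qed
  then show "\<sigma> \<in> Eset d n" using sp by (simp add: Eset_def)
qed

lemma small_case:
  assumes n: "n = d + 1"
  shows "\<sigma> \<in> Eset d n \<longleftrightarrow> \<sigma> permutes {1..n} \<and> evenperm \<sigma>"
proof -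
  have "S \<subseteq> {1..n} \<and> card S = d + 1 \<longleftrightarrow> S = {1..n}" for S
    using n card_subset_eq[of "{1..n}" S] by auto
  then have "\<sigma> \<in> Eset d n \<longleftrightarrow> \<sigma> permutes {1..n} \<and> even (ninv \<sigma> {1..n})"
    by (simp add: Eset_def)
  then show ?thesis using evenperm_ninv[of \<sigma> n] n by auto
qed


lemma iso_Z2:
  assumes n: "n \<ge> 2"
  shows "(sym_group n)\<lparr>carrier := {id, revp n}\<rparr> \<cong> integer_mod_group 2"
proof (rule is_isoI)
  let ?h = "\<lambda>p::nat \<Rightarrow> nat. if p = id then (0::int) else 1"
  have ne: "revp n \<noteq> id" using revp_ne_id[OF n] .
  have rr: "revp n \<circ> revp n = id" by (rule ext) (simp add: revp_revp)
  have car: "carrier (integer_mod_group 2) = {0, 1}" by (auto simp: carrier_integer_mod_group)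
  show "?h \<in> iso ((sym_group n)\<lparr>carrier := {id, revp n}\<rparr>) (integer_mod_group 2)"
    unfolding iso_def hom_def
  proof (intro CollectI conjI)
    show "?h \<in> carrier ((sym_group n)\<lparr>carrier := {id, revp n}\<rparr>) \<rightarrow> carrier (integer_mod_group 2)"
      using car by auto
    show "\<forall>x\<in>carrier ((sym_group n)\<lparr>carrier := {id, revp n}\<rparr>). \<forall>y\<in>carrier ((sym_group n)\<lparr>carrier := {id, revp n}\<rparr>).
        ?h (x \<otimes>\<^bsub>(sym_group n)\<lparr>carrier := {id, revp n}\<rparr>\<^esub> y) = ?h x \<otimes>\<^bsub>integer_mod_group 2\<^esub> ?h y"
      using ne rr by (auto simp: sym_group_def)
    show "bij_betw ?h (carrier ((sym_group n)\<lparr>carrier := {id, revp n}\<rparr>)) (carrier (integer_mod_group 2))"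
      unfolding car using ne by (auto simp: bij_betw_def inj_on_def)
  qed
qed

theorem proposition3p8:
  fixes d n :: nat
  assumes "odd d" and "n \<ge> d + 1"
  shows "(n = d + 1 \<longrightarrow> C_group d n = carrier (alt_group n))
    \<and> (n = d + 2 \<longrightarrow> C_group d n =
          carrier (alt_group n) \<inter> {\<sigma>. \<forall>i\<in>{1..n}. even (\<sigma> i) \<longleftrightarrow> even i})
    \<and> (n \<ge> d + 3 \<and> even ((d + 1) div 2) \<longrightarrow>
          (sym_group n)\<lparr>carrier := C_group d n\<rparr> \<cong> integer_mod_group 2)
    \<and> (n \<ge> d + 3 \<and> odd ((d + 1) div 2) \<longrightarrow> C_group d n = {id})"
proof (intro conjI impI)
  have alt: "carrier (alt_group n) = {p. p permutes {1..n} \<and> evenperm p}"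
    by (simp add: alt_group_def sym_group_def)
  show "C_group d n = carrier (alt_group n)" if "n = d + 1"
    unfolding C_eq alt using small_case[OF that] by blast
  show "C_group d n = carrier (alt_group n) \<inter> {\<sigma>. \<forall>i\<in>{1..n}. even (\<sigma> i) \<longleftrightarrow> even i}" if "n = d + 2"
    unfolding C_eq alt using mid_case[OF assms(1) that] by blast
  show "(sym_group n)\<lparr>carrier := C_group d n\<rparr> \<cong> integer_mod_group 2"
    if "n \<ge> d + 3 \<and> even ((d + 1) div 2)"
  proof -
    have "C_group d n = {id, revp n}"
      unfolding C_eq
      using big_case[OF assms(1)] that id_Eset revp_Eset[OF assms(2,1)] by blast
    then show ?thesis using iso_Z2[of n] that by simp
  qed
  show "C_group d n = {id}" if "n \<ge> d + 3 \<and> odd ((d + 1) div 2)"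
    unfolding C_eq
    using big_case[OF assms(1)] that id_Eset revp_Eset[OF assms(2,1)] by blast
qed


end
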